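(* Let $\mathfrak{G}=(Y,R,E)$ be a descriptive $\mathsf{MS4}$-frame, $\rho\mathfrak{G}=(X,R',Q')$ its skeleton and $\pi:Y\to X$ the quotient map. Then (1) $\pi^{-1}[\max X]=\operatorname{qmax}Y$; (2) $\pi^{-1}[E_{Q'}[A]]=E_Q[\pi^{-1}[A]]$ for every $A\subseteq X$; (3) $\pi^{-1}[E_{Q'}[\max X]]=E_Q[\operatorname{qmax}Y]$.
   Context: A descriptive $\mathsf{MS4}$-frame is $(Y,R,E)$ with $Y$ a Stone space, $R$ a continuous quasi-order, $E$ a continuous equivalence relation (continuous: $R[x]=\{y:xRy\}$ closed for all $x$, $R^{-1}[U]$ clopen for clopen $U$), such that $xEy$, $yRz$ imply $\exists u$ with $xRu$, $uEz$. $Q=E\circ R$: $xQy$ iff $\exists z$ with $xRz$, $zEy$. Skeleton: with $xE_Ry$ iff $xRy$ and $yRx$, $X=Y/E_R$, $\pi$ the quotient map, $\pi(x)R'\pi(y)$ iff $xRy$, $\pi(x)Q'\pi(y)$ iff $xQy$. For a quasi-order $S$, $E_S$ is the equivalence $xE_Sy$ iff $xSy$ and $ySx$; $S[A]=\{y:\exists a\in A,\ aSy\}$. $\max X=\{x: xR'y\Rightarrow x=y\}$, $\operatorname{qmax}Y=\{x: xRy\Rightarrow yRx\}$. *)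

theory Defs
  imports "HOL-Analysis.Analysis"
begin

definition stone_space :: "'a topology \<Rightarrow> bool" where
  "stone_space T \<longleftrightarrow> compact_space T \<and> Hausdorff_space T \<and>
     (\<forall>U x. openin T U \<and> x \<in> U \<longrightarrow> (\<exists>V. openin T V \<and> closedin T V \<and> x \<in> V \<and> V \<subseteq> U))"

definition continuous_rel :: "'a topology \<Rightarrow> ('a \<times> 'a) set \<Rightarrow> bool" where
  "continuous_rel T R \<longleftrightarrow> R \<subseteq> topspace T \<times> topspace T \<and>
     (\<forall>x \<in> topspace T. closedin T (R `` {x})) \<and>
     (\<forall>U. openin T U \<and> closedin T U \<longrightarrow>
          openin T (R\<inverse> `` U) \<and> closedin T (R\<inverse> `` U))"

definition quasi_order_on :: "'a set \<Rightarrow> ('a \<times> 'a) set \<Rightarrow> bool" where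
  "quasi_order_on Y R \<longleftrightarrow> R \<subseteq> Y \<times> Y \<and> refl_on Y R \<and> trans R"

definition descriptive_MS4_frame ::
  "'a topology \<Rightarrow> ('a \<times> 'a) set \<Rightarrow> ('a \<times> 'a) set \<Rightarrow> bool" where
  "descriptive_MS4_frame T R E \<longleftrightarrow>
     stone_space T \<and>
     quasi_order_on (topspace T) R \<and> continuous_rel T R \<and>
     equiv (topspace T) E \<and> continuous_rel T E \<and>
     (\<forall>x y z. (x, y) \<in> E \<and> (y, z) \<in> R \<longrightarrow> (\<exists>u. (x, u) \<in> R \<and> (u, z) \<in> E))"

definition Qrel :: "('a \<times> 'a) set \<Rightarrow> ('a \<times> 'a) set \<Rightarrow> ('a \<times> 'a) set" where
  "Qrel R E = {(x, y). \<exists>z. (x, z) \<in> R \<and> (z, y) \<in> E}"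

definition Eof :: "('b \<times> 'b) set \<Rightarrow> ('b \<times> 'b) set" where
  "Eof S = {(x, y). (x, y) \<in> S \<and> (y, x) \<in> S}"

definition skel_pi :: "('a \<times> 'a) set \<Rightarrow> 'a \<Rightarrow> 'a set" where
  "skel_pi R x = Eof R `` {x}"

definition skel_X :: "'a set \<Rightarrow> ('a \<times> 'a) set \<Rightarrow> 'a set set" where
  "skel_X Y R = Y // Eof R"

definition skel_R :: "'a set \<Rightarrow> ('a \<times> 'a) set \<Rightarrow> ('a set \<times> 'a set) set" where
  "skel_R Y R = {(skel_pi R x, skel_pi R y) | x y. x \<in> Y \<and> y \<in> Y \<and> (x, y) \<in> R}"

definition skel_Q :: "'a set \<Rightarrow> ('a \<times> 'a) set \<Rightarrow> ('a \<times> 'a) set \<Rightarrow> ('a set \<times> 'a set) set" where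
  "skel_Q Y R E = {(skel_pi R x, skel_pi R y) | x y. x \<in> Y \<and> y \<in> Y \<and> (x, y) \<in> Qrel R E}"

definition max_set :: "'b set \<Rightarrow> ('b \<times> 'b) set \<Rightarrow> 'b set" where
  "max_set X S = {x \<in> X. \<forall>y. (x, y) \<in> S \<longrightarrow> x = y}"

definition qmax_set :: "'a set \<Rightarrow> ('a \<times> 'a) set \<Rightarrow> 'a set" where
  "qmax_set Y R = {x \<in> Y. \<forall>y. (x, y) \<in> R \<longrightarrow> (y, x) \<in> R}"

definition skel_preim :: "'a set \<Rightarrow> ('a \<times> 'a) set \<Rightarrow> 'a set set \<Rightarrow> 'a set" where
  "skel_preim Y R A = {x \<in> Y. skel_pi R x \<in> A}"

end

theory Submission
  imports Defs
begin

theorem lemma3p11: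
  fixes T :: "'a topology" and R E :: "('a \<times> 'a) set"
  assumes "descriptive_MS4_frame T R E"
  defines "Y \<equiv> topspace T"
  defines "X \<equiv> skel_X Y R"
  defines "Q \<equiv> Qrel R E"
  shows "skel_preim Y R (max_set X (skel_R Y R)) = qmax_set Y R
    \<and> (\<forall>A. A \<subseteq> X \<longrightarrow>
           skel_preim Y R (Eof (skel_Q Y R E) `` A) = Eof Q `` (skel_preim Y R A))
    \<and> skel_preim Y R (Eof (skel_Q Y R E) `` (max_set X (skel_R Y R)))
           = Eof Q `` (qmax_set Y R)"
proof -
  have RY: "R \<subseteq> Y \<times> Y" and Rrefl: "\<And>x. x \<in> Y \<Longrightarrow> (x,x) \<in> R"
    and Rtr: "\<And>x y z. (x,y) \<in> R \<Longrightarrow> (y,z) \<in> R \<Longrightarrow> (x,z) \<in> R"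
    using assms(1) unfolding descriptive_MS4_frame_def quasi_order_on_def Y_def refl_on_def trans_def
    by blast+
  have eqE: "equiv Y E" using assms(1) unfolding descriptive_MS4_frame_def Y_def by blast
  have EY: "E \<subseteq> Y \<times> Y" using eqE unfolding equiv_def refl_on_def by blast
  have Etr: "\<And>x y z. (x,y) \<in> E \<Longrightarrow> (y,z) \<in> E \<Longrightarrow> (x,z) \<in> E"
    using eqE unfolding equiv_def trans_def by blast
  have Esym: "\<And>x y. (x,y) \<in> E \<Longrightarrow> (y,x) \<in> E"
    using eqE unfolding equiv_def sym_def by blast
  have comm: "\<And>x y z. (x, y) \<in> E \<Longrightarrow> (y, z) \<in> R \<Longrightarrow> (\<exists>u. (x, u) \<in> R \<and> (u, z) \<in> E)"
    using assms(1) unfolding descriptive_MS4_frame_def by blast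
  have piEq: "skel_pi R x = skel_pi R y \<longleftrightarrow> (x,y) \<in> R \<and> (y,x) \<in> R" if that: "x \<in> Y" "y \<in> Y" for x y
  proof
    assume h: "skel_pi R x = skel_pi R y"
    have "y \<in> skel_pi R y" using Rrefl[OF that(2)] unfolding skel_pi_def Eof_def by auto
    then show "(x,y) \<in> R \<and> (y,x) \<in> R" using h unfolding skel_pi_def Eof_def by auto
  next
    assume h: "(x,y) \<in> R \<and> (y,x) \<in> R"
    show "skel_pi R x = skel_pi R y" unfolding skel_pi_def Eof_def
      using h Rtr by blast
  qed
  have QY: "Q \<subseteq> Y \<times> Y" unfolding Q_def Qrel_def using RY EY by blast
  have Qresp: "(u',v') \<in> Q" if H: "(u,v) \<in> Q" "(u',u) \<in> R" "(v,v') \<in> R" for u v u' v'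
  proof -
    obtain z where z: "(u,z) \<in> R" "(z,v) \<in> E" using H(1) unfolding Q_def Qrel_def by blast
    obtain w where w: "(z,w) \<in> R" "(w,v') \<in> E" using comm[OF z(2) H(3)] by blast
    have "(u',w) \<in> R" using Rtr H(2) z(1) w(1) by blast
    then show ?thesis using w(2) unfolding Q_def Qrel_def by blast
  qed
  have Qrefl: "(x,x) \<in> Q" if "x \<in> Y" for x
    using Rrefl[OF that] eqE that unfolding Q_def Qrel_def equiv_def refl_on_def by blast
  have sQ: "(skel_pi R u, skel_pi R v) \<in> skel_Q Y R E \<longleftrightarrow> (u,v) \<in> Q" if Huv: "u \<in> Y" "v \<in> Y" for u v
  proof
    assume "(skel_pi R u, skel_pi R v) \<in> skel_Q Y R E"
    then obtain a b where ab: "a \<in> Y" "b \<in> Y" "(a,b) \<in> Q" "skel_pi R u = skel_pi R a" "skel_pi R v = skel_pi R b"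
      unfolding skel_Q_def Q_def by blast
    show "(u,v) \<in> Q" using Qresp[OF ab(3)] piEq ab Huv by metis
  next
    assume "(u,v) \<in> Q" then show "(skel_pi R u, skel_pi R v) \<in> skel_Q Y R E"
      using Huv unfolding skel_Q_def Q_def by blast
  qed
  have XE: "a \<in> X \<Longrightarrow> \<exists>y\<in>Y. a = skel_pi R y" for a
    unfolding X_def skel_X_def skel_pi_def quotient_def by blast
  have piX: "y \<in> Y \<Longrightarrow> skel_pi R y \<in> X" for y
    unfolding X_def skel_X_def skel_pi_def quotient_def by blast
  have P1: "skel_preim Y R (max_set X (skel_R Y R)) = qmax_set Y R"
  proof (rule set_eqI)
    fix x
    show "x \<in> skel_preim Y R (max_set X (skel_R Y R)) \<longleftrightarrow> x \<in> qmax_set Y R"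
    proof
      assume "x \<in> skel_preim Y R (max_set X (skel_R Y R))"
      then have x: "x \<in> Y" and m: "\<And>b. (skel_pi R x, b) \<in> skel_R Y R \<Longrightarrow> skel_pi R x = b"
        unfolding skel_preim_def max_set_def by auto
      have "(y,x) \<in> R" if "(x,y) \<in> R" for y
      proof -
        have y: "y \<in> Y" using that RY by blast
        have "(skel_pi R x, skel_pi R y) \<in> skel_R Y R" unfolding skel_R_def using x y that by blast
        then show ?thesis using m piEq x y by blast
      qed
      then show "x \<in> qmax_set Y R" using x unfolding qmax_set_def by blast
    next
      assume "x \<in> qmax_set Y R"
      then have x: "x \<in> Y" and q: "\<And>y. (x,y) \<in> R \<Longrightarrow> (y,x) \<in> R" unfolding qmax_set_def by auto
      have "skel_pi R x = b" if Hb: "(skel_pi R x, b) \<in> skel_R Y R" for b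
      proof -
        obtain u v where uv: "u \<in> Y" "v \<in> Y" "(u,v) \<in> R" "skel_pi R x = skel_pi R u" "b = skel_pi R v"
          using Hb unfolding skel_R_def by blast
        have "(x,u) \<in> R" using piEq uv x by blast
        then have "(x,v) \<in> R" using Rtr uv by blast
        then show ?thesis using q piEq x uv by blast
      qed
      then show "x \<in> skel_preim Y R (max_set X (skel_R Y R))"
        using x piX unfolding skel_preim_def max_set_def by blast
    qed
  qed
  have P2: "skel_preim Y R (Eof (skel_Q Y R E) `` A) = Eof Q `` (skel_preim Y R A)" if AX: "A \<subseteq> X" for A
  proof (rule set_eqI)
    fix x
    show "x \<in> skel_preim Y R (Eof (skel_Q Y R E) `` A) \<longleftrightarrow> x \<in> Eof Q `` (skel_preim Y R A)"
    proof
      assume "x \<in> skel_preim Y R (Eof (skel_Q Y R E) `` A)"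
      then obtain a where x: "x \<in> Y" and a: "a \<in> A" "(a, skel_pi R x) \<in> skel_Q Y R E" "(skel_pi R x, a) \<in> skel_Q Y R E"
        unfolding skel_preim_def Eof_def by blast
      obtain y where y: "y \<in> Y" "a = skel_pi R y" using XE a(1) AX by blast
      have "(y,x) \<in> Q" "(x,y) \<in> Q" using sQ a y x by auto
      then show "x \<in> Eof Q `` (skel_preim Y R A)"
        using y a unfolding skel_preim_def Eof_def by blast
    next
      assume "x \<in> Eof Q `` (skel_preim Y R A)"
      then obtain y where y: "y \<in> Y" "skel_pi R y \<in> A" "(y,x) \<in> Q" "(x,y) \<in> Q"
        unfolding skel_preim_def Eof_def by blast
      have x: "x \<in> Y" using y QY by blast
      show "x \<in> skel_preim Y R (Eof (skel_Q Y R E) `` A)"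
        using sQ x y unfolding skel_preim_def Eof_def by blast
    qed
  qed
  have "max_set X (skel_R Y R) \<subseteq> X" unfolding max_set_def by blast
  then show ?thesis using P1 P2 by auto
qed

end
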